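(* Let $T$ be a ditree and let $S$ be a source set or a sink set of $T$ with $|S|\ge 2$ that contains no leaf of $T$. Suppose $M$ is a minimum-size geodetic set of $T$ with $|M\cap S|=1$, say $M\cap S=\{u\}$. For any $w\in S$, the set $N=(M\setminus\{u\})\cup\{w\}$ is also a minimum-size geodetic set of $T$.
   Context: All digraphs are finite, without loops or parallel arcs. The underlying undirected graph of a digraph is obtained by forgetting orientations and deleting parallel edges. A ditree is a digraph whose underlying undirected graph is a tree (it may contain $2$-cycles, i.e., pairs of opposite arcs $uv,vu$). A leaf is a vertex of degree $1$ in the underlying undirected graph. For $S\subseteq V(D)$, $N^-(S)$ (resp. $N^+(S)$) is the set of vertices outside $S$ having an arc to (resp. from) some vertex of $S$. A source set is a maximal strongly connected component $S$ with $N^-(S)\setminus S=\emptyset$; a sink set is a maximal strongly connected component $S$ with $N^+(S)\setminus S=\emptyset$. For vertices $u,v$, $I(u,v)$ is the set of vertices on some shortest directed path from $u$ to $v$; for $S\subseteq V(D)$, $I(S)=\bigcup_{u,v\in S}(I(u,v)\cup I(v,u))$. A geodetic set is a set $S$ with $I(S)=V(D)$. *)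

theory Defs
  imports Main
begin

definition digraph :: "'a set \<Rightarrow> ('a \<times> 'a) set \<Rightarrow> bool" where
  "digraph V A \<longleftrightarrow> finite V \<and> A \<subseteq> V \<times> V \<and> (\<forall>v. (v, v) \<notin> A)"

definition uadj :: "('a \<times> 'a) set \<Rightarrow> 'a \<Rightarrow> 'a \<Rightarrow> bool" where
  "uadj A u v \<longleftrightarrow> (u, v) \<in> A \<or> (v, u) \<in> A"

definition uconnected :: "'a set \<Rightarrow> ('a \<times> 'a) set \<Rightarrow> bool" where
  "uconnected V A \<longleftrightarrow> (\<forall>u\<in>V. \<forall>v\<in>V. (u, v) \<in> (A \<union> A\<inverse>)\<^sup>*)"

definition ucycle :: "'a set \<Rightarrow> ('a \<times> 'a) set \<Rightarrow> 'a list \<Rightarrow> bool" where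
  "ucycle V A cs \<longleftrightarrow> length cs \<ge> 3 \<and> distinct cs \<and> set cs \<subseteq> V
     \<and> (\<forall>i. Suc i < length cs \<longrightarrow> uadj A (cs ! i) (cs ! Suc i))
     \<and> uadj A (last cs) (hd cs)"

definition ditree :: "'a set \<Rightarrow> ('a \<times> 'a) set \<Rightarrow> bool" where
  "ditree V A \<longleftrightarrow> digraph V A \<and> V \<noteq> {} \<and> uconnected V A \<and> (\<nexists>cs. ucycle V A cs)"

definition leaf :: "'a set \<Rightarrow> ('a \<times> 'a) set \<Rightarrow> 'a \<Rightarrow> bool" where
  "leaf V A v \<longleftrightarrow> v \<in> V \<and> card {x \<in> V. uadj A v x} = 1"

definition reach :: "('a \<times> 'a) set \<Rightarrow> 'a \<Rightarrow> 'a \<Rightarrow> bool" where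
  "reach A u v \<longleftrightarrow> (u, v) \<in> A\<^sup>*"

definition strong_component :: "'a set \<Rightarrow> ('a \<times> 'a) set \<Rightarrow> 'a set \<Rightarrow> bool" where
  "strong_component V A S \<longleftrightarrow> S \<noteq> {} \<and> S \<subseteq> V
     \<and> (\<forall>u\<in>S. \<forall>v\<in>S. reach A u v)
     \<and> (\<forall>x\<in>V. (\<exists>u\<in>S. reach A u x \<and> reach A x u) \<longrightarrow> x \<in> S)"

definition in_nbhd :: "('a \<times> 'a) set \<Rightarrow> 'a set \<Rightarrow> 'a set" where
  "in_nbhd A S = {x. x \<notin> S \<and> (\<exists>y\<in>S. (x, y) \<in> A)}"

definition out_nbhd :: "('a \<times> 'a) set \<Rightarrow> 'a set \<Rightarrow> 'a set" where
  "out_nbhd A S = {x. x \<notin> S \<and> (\<exists>y\<in>S. (y, x) \<in> A)}"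

definition source_set :: "'a set \<Rightarrow> ('a \<times> 'a) set \<Rightarrow> 'a set \<Rightarrow> bool" where
  "source_set V A S \<longleftrightarrow> strong_component V A S \<and> in_nbhd A S - S = {}"

definition sink_set :: "'a set \<Rightarrow> ('a \<times> 'a) set \<Rightarrow> 'a set \<Rightarrow> bool" where
  "sink_set V A S \<longleftrightarrow> strong_component V A S \<and> out_nbhd A S - S = {}"

definition dwalk :: "'a set \<Rightarrow> ('a \<times> 'a) set \<Rightarrow> 'a list \<Rightarrow> 'a \<Rightarrow> 'a \<Rightarrow> bool" where
  "dwalk V A p u v \<longleftrightarrow> p \<noteq> [] \<and> hd p = u \<and> last p = v \<and> set p \<subseteq> V
     \<and> (\<forall>i. Suc i < length p \<longrightarrow> (p ! i, p ! Suc i) \<in> A)"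

(* shortest directed path from u to v (a walk of minimum length is a path) *)
definition shortest_dpath :: "'a set \<Rightarrow> ('a \<times> 'a) set \<Rightarrow> 'a list \<Rightarrow> 'a \<Rightarrow> 'a \<Rightarrow> bool" where
  "shortest_dpath V A p u v \<longleftrightarrow> dwalk V A p u v \<and> (\<forall>q. dwalk V A q u v \<longrightarrow> length p \<le> length q)"

definition interval :: "'a set \<Rightarrow> ('a \<times> 'a) set \<Rightarrow> 'a \<Rightarrow> 'a \<Rightarrow> 'a set" where
  "interval V A u v = \<Union> {set p | p. shortest_dpath V A p u v}"

definition interval_set :: "'a set \<Rightarrow> ('a \<times> 'a) set \<Rightarrow> 'a set \<Rightarrow> 'a set" where
  "interval_set V A S = (\<Union>u\<in>S. \<Union>v\<in>S. interval V A u v \<union> interval V A v u)"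

definition geodetic :: "'a set \<Rightarrow> ('a \<times> 'a) set \<Rightarrow> 'a set \<Rightarrow> bool" where
  "geodetic V A S \<longleftrightarrow> S \<subseteq> V \<and> interval_set V A S = V"

definition min_geodetic :: "'a set \<Rightarrow> ('a \<times> 'a) set \<Rightarrow> 'a set \<Rightarrow> bool" where
  "min_geodetic V A M \<longleftrightarrow> geodetic V A M \<and> (\<forall>S. geodetic V A S \<longrightarrow> card M \<le> card S)"

end

theory Submission
  imports Defs
begin

fun dw :: "('a \<times> 'a) set \<Rightarrow> 'a list \<Rightarrow> bool" where
  "dw R [] = False"
| "dw R [x] = True"
| "dw R (x # y # xs) = ((x, y) \<in> R \<and> dw R (y # xs))"

definition avoid :: "('a \<times> 'a) set \<Rightarrow> 'a \<Rightarrow> ('a \<times> 'a) set" where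
  "avoid A z = {(x, y). uadj A x y \<and> x \<noteq> z \<and> y \<noteq> z}"

lemma dw_append: "dw R (xs @ y # ys) = (dw R (xs @ [y]) \<and> dw R (y # ys))"
proof (induction xs)
  case Nil then show ?case by simp
next
  case (Cons x xs) then show ?case by (cases xs) auto
qed

lemma dw_nth: "p \<noteq> [] \<Longrightarrow> dw R p \<longleftrightarrow> (\<forall>i. Suc i < length p \<longrightarrow> (p ! i, p ! Suc i) \<in> R)"
proof (induction R p rule: dw.induct)
  case (3 R x y xs)
  show ?case
  proof
    assume "dw R (x # y # xs)"
    then show "\<forall>i. Suc i < length (x # y # xs) \<longrightarrow> ((x # y # xs) ! i, (x # y # xs) ! Suc i) \<in> R"
      using 3 by (auto simp: less_Suc_eq_0_disj)
  next
    assume H: "\<forall>i. Suc i < length (x # y # xs) \<longrightarrow> ((x # y # xs) ! i, (x # y # xs) ! Suc i) \<in> R"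
    have "(x, y) \<in> R" using H[rule_format, of 0] by simp
    moreover have "\<forall>i. Suc i < length (y # xs) \<longrightarrow> ((y # xs) ! i, (y # xs) ! Suc i) \<in> R"
      using H by (metis Suc_less_eq length_Cons nth_Cons_Suc)
    ultimately show "dw R (x # y # xs)" using 3 by simp
  qed
qed auto

lemma dw_ne: "dw R p \<Longrightarrow> p \<noteq> []"
  by (cases p) auto

lemma dwalk_dw: "dwalk V A p u v \<longleftrightarrow> dw A p \<and> hd p = u \<and> last p = v \<and> set p \<subseteq> V"
  unfolding dwalk_def using dw_nth dw_ne by metis

lemma dw_hd_last: "dw R p \<Longrightarrow> (hd p, last p) \<in> R\<^sup>*"
  by (induction R p rule: dw.induct) auto

lemma dw_reach: "dw R p \<Longrightarrow> x \<in> set p \<Longrightarrow> (hd p, x) \<in> R\<^sup>* \<and> (x, last p) \<in> R\<^sup>*"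
proof -
  assume d: "dw R p" and x: "x \<in> set p"
  then obtain xs ys where p: "p = xs @ x # ys" by (meson split_list)
  have "dw R (xs @ [x])" "dw R (x # ys)" using d dw_append p by metis+
  then show ?thesis using dw_hd_last p by (cases xs) fastforce+
qed

lemma dw_avoid: "dw A p \<Longrightarrow> z \<notin> set p \<Longrightarrow> dw (avoid A z) p"
  by (induction A p rule: dw.induct) (auto simp: avoid_def uadj_def)

lemma dw_avoid_rt: "dw A p \<Longrightarrow> z \<notin> set p \<Longrightarrow> (hd p, last p) \<in> (avoid A z)\<^sup>*"
  using dw_avoid dw_hd_last by metis

lemma rt_dw: "(x, y) \<in> R\<^sup>* \<Longrightarrow> \<exists>p. dw R p \<and> hd p = x \<and> last p = y"
proof (induction rule: converse_rtrancl_induct)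
  case base then show ?case by (intro exI[of _ "[y]"]) simp
next
  case (step x x')
  then obtain p where "dw R p" "hd p = x'" "last p = y" by blast
  then show ?case using step by (intro exI[of _ "x # p"]) (cases p, auto)
qed

lemma dw_setV: "dw R p \<Longrightarrow> R \<subseteq> V \<times> V \<Longrightarrow> hd p \<in> V \<Longrightarrow> set p \<subseteq> V"
  by (induction R p rule: dw.induct) auto

lemma shortcut: "dw R p \<Longrightarrow> \<not> distinct p \<Longrightarrow>
   \<exists>q. dw R q \<and> hd q = hd p \<and> last q = last p \<and> length q < length p \<and> set q \<subseteq> set p"
proof -
  assume d: "dw R p" "\<not> distinct p"
  then obtain xs ys zs y where p: "p = xs @ [y] @ ys @ [y] @ zs" using not_distinct_decomp by blast
  have "dw R (xs @ y # (ys @ y # zs))" using d p by simp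
  then have 1: "dw R (xs @ [y])" and "dw R (y # ys @ y # zs)" using dw_append[of R xs y "ys @ y # zs"] by blast+
  then have "dw R ((y # ys) @ y # zs)" by simp
  then have "dw R (y # zs)" using dw_append[of R "y # ys" y zs] by blast
  with 1 have "dw R (xs @ y # zs)" using dw_append[of R xs y zs] by blast
  moreover have "hd (xs @ y # zs) = hd p" using p by (cases xs) simp_all
  moreover have "last (xs @ y # zs) = last p" using p by (simp add: last_append)
  moreover have "length (xs @ y # zs) < length p" "set (xs @ y # zs) \<subseteq> set p" using p by auto
  ultimately show ?thesis by blast
qed

lemma least_ex: "P (p :: 'b list) \<Longrightarrow> \<exists>p. P p \<and> (\<forall>q. P q \<longrightarrow> length p \<le> length q)"
  using ex_has_least_nat by metis


lemma shortest_distinct: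
  assumes "shortest_dpath V A p u v" shows "distinct p"
proof (rule ccontr)
  assume "\<not> distinct p"
  moreover have d: "dw A p" "hd p = u" "last p = v" "set p \<subseteq> V"
    using assms unfolding shortest_dpath_def dwalk_dw by auto
  ultimately obtain q where "dw A q" "hd q = hd p" "last q = last p" "length q < length p" "set q \<subseteq> set p"
    using shortcut by metis
  then show False using assms d unfolding shortest_dpath_def dwalk_dw by force
qed

lemma shortest_ex:
  assumes "digraph V A" "(u, v) \<in> A\<^sup>*" "u \<in> V"
  shows "\<exists>p. shortest_dpath V A p u v"
proof -
  obtain p where "dw A p" "hd p = u" "last p = v" using rt_dw assms(2) by metis
  moreover then have "set p \<subseteq> V" using dw_setV assms unfolding digraph_def by metis
  ultimately have "dwalk V A p u v" unfolding dwalk_dw by simp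
  then show ?thesis unfolding shortest_dpath_def using least_ex[of "\<lambda>p. dwalk V A p u v"] by blast
qed

lemma avoid_path:
  assumes "(x, y) \<in> (avoid A z)\<^sup>*"
  shows "\<exists>p. dw (avoid A z) p \<and> hd p = x \<and> last p = y \<and> distinct p"
proof -
  obtain p0 where "dw (avoid A z) p0 \<and> hd p0 = x \<and> last p0 = y" using rt_dw assms by metis
  then obtain p where p: "dw (avoid A z) p \<and> hd p = x \<and> last p = y"
    and m: "\<forall>q. dw (avoid A z) q \<and> hd q = x \<and> last q = y \<longrightarrow> length p \<le> length q"
    using least_ex[of "\<lambda>p. dw (avoid A z) p \<and> hd p = x \<and> last p = y"] by blast
  have "distinct p"
  proof (rule ccontr)
    assume "\<not> distinct p"
    then obtain q where "dw (avoid A z) q" "hd q = hd p" "last q = last p" "length q < length p"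
      using shortcut p by metis
    then show False using m p by force
  qed
  then show ?thesis using p by blast
qed

lemma dw_avoid_props:
  "dw (avoid A z) p \<Longrightarrow> length p \<ge> 2 \<Longrightarrow> z \<notin> set p \<and> dw {(x, y). uadj A x y} p"
proof (induction "avoid A z" p rule: dw.induct)
  case (3 x y xs)
  then show ?case by (cases xs) (auto simp: avoid_def)
qed auto

lemma core:
  assumes T: "ditree V A" and z: "z \<in> V" and a1: "uadj A z c1" and a2: "uadj A z c2" and ne: "c1 \<noteq> c2"
  shows "(c1, c2) \<notin> (avoid A z)\<^sup>*"
proof
  assume "(c1, c2) \<in> (avoid A z)\<^sup>*"
  then obtain p where p: "dw (avoid A z) p" "hd p = c1" "last p = c2" "distinct p"
    using avoid_path by metis
  have pne: "p \<noteq> []" using p dw_ne by metis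
  then obtain x xs where px: "p = x # xs" by (meson neq_Nil_conv)
  have "xs \<noteq> []" using px p ne by auto
  then have len: "length p \<ge> 2" using px by (cases xs) auto
  then have zp: "z \<notin> set p" and dp: "dw {(x, y). uadj A x y} p" using dw_avoid_props p(1) by metis+
  have dg: "digraph V A" using T unfolding ditree_def by simp
  have c1V: "c1 \<in> V" using a1 dg unfolding uadj_def digraph_def by auto
  have sub: "{(x, y). uadj A x y} \<subseteq> V \<times> V" using dg unfolding digraph_def uadj_def by auto
  have pV: "set p \<subseteq> V" using dw_setV[OF dp sub] c1V p(2) by simp
  have e: "dw {(x, y). uadj A x y} [last p, z]" using a2 p(3) by (auto simp: uadj_def)
  have "dw {(x, y). uadj A x y} (butlast p @ [last p])" using dp pne by simp
  then have "dw {(x, y). uadj A x y} (butlast p @ last p # [z])"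
    using e dw_append[of "{(x, y). uadj A x y}" "butlast p" "last p" "[z]"] by blast
  moreover have "butlast p @ last p # [z] = p @ [z]" using pne
    by (metis append_butlast_last_id append_Cons append_Nil append_assoc)
  ultimately have dc: "dw {(x, y). uadj A x y} (p @ [z])" by simp
  have "ucycle V A (p @ [z])"
    unfolding ucycle_def
  proof (intro conjI)
    show "3 \<le> length (p @ [z])" using len by simp
    show "distinct (p @ [z])" using p zp by simp
    show "set (p @ [z]) \<subseteq> V" using pV z by simp
    show "\<forall>i. Suc i < length (p @ [z]) \<longrightarrow> uadj A ((p @ [z]) ! i) ((p @ [z]) ! Suc i)"
      using dw_nth[of "p @ [z]" "{(x, y). uadj A x y}"] dc by simp
    show "uadj A (last (p @ [z])) (hd (p @ [z]))" using a1 p pne by simp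
  qed
  then show False using T unfolding ditree_def by blast
qed


lemma dw_tl: "dw R (x # ys) \<Longrightarrow> ys \<noteq> [] \<Longrightarrow> dw R ys"
  by (cases ys) auto

lemma dw_prefix: "dw R (xs @ ys) \<Longrightarrow> xs \<noteq> [] \<Longrightarrow> dw R xs"
proof (induction xs)
  case (Cons x xs)
  show ?case
  proof (cases xs)
    case (Cons y xs')
    then have "dw R (xs @ ys)" using Cons.prems dw_tl by (metis append_Cons list.simps(3))
    then show ?thesis using Cons Cons.IH Cons.prems by simp
  qed simp
qed simp

lemma dw_suffix: "dw R (xs @ ys) \<Longrightarrow> ys \<noteq> [] \<Longrightarrow> dw R ys"
proof (induction xs)
  case (Cons x xs)
  then show ?case using dw_tl by (metis Nil_is_append_conv append_Cons)
qed simp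

lemma source_closed:
  assumes "source_set V A S" "(a, s) \<in> A\<^sup>*" "s \<in> S" shows "a \<in> S"
  using assms(2,3)
proof (induction rule: converse_rtrancl_induct)
  case (step y z)
  show ?case
  proof (rule ccontr)
    assume "y \<notin> S"
    then have "y \<in> in_nbhd A S" using step unfolding in_nbhd_def by blast
    then show False using assms(1) unfolding source_set_def in_nbhd_def by blast
  qed
qed simp

lemma interval_iff: "z \<in> interval V A a b \<longleftrightarrow> (\<exists>p. shortest_dpath V A p a b \<and> z \<in> set p)"
  unfolding interval_def by blast

lemma shortest_dw: "shortest_dpath V A p a b \<Longrightarrow> dw A p \<and> hd p = a \<and> last p = b \<and> set p \<subseteq> V"
  unfolding shortest_dpath_def dwalk_dw by blast

lemma hd_in: "dw R p \<Longrightarrow> hd p \<in> set p" using dw_ne by (metis list.set_sel(1))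
lemma last_in: "dw R p \<Longrightarrow> last p \<in> set p" using dw_ne by (metis last_in_set)

lemma H:
  assumes "digraph V A" "(s, t) \<in> A\<^sup>*" "s \<in> V" "z = s \<or> z = t \<or> (s, t) \<notin> (avoid A z)\<^sup>*"
  shows "z \<in> interval V A s t"
proof -
  obtain p where p: "shortest_dpath V A p s t" using shortest_ex[OF assms(1-3)] by blast
  have d: "dw A p" "hd p = s" "last p = t" using shortest_dw[OF p] by simp_all
  have "z \<in> set p"
  proof (rule ccontr)
    assume zn: "z \<notin> set p"
    then have "z \<noteq> s" "z \<noteq> t" using hd_in[OF d(1)] last_in[OF d(1)] d by auto
    moreover have "(s, t) \<in> (avoid A z)\<^sup>*" using dw_avoid_rt[OF d(1) zn] d by simp
    ultimately show False using assms(4) by blast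
  qed
  then show ?thesis using p unfolding interval_iff by blast
qed

lemma avoid_sym: "(x, y) \<in> (avoid A z)\<^sup>* \<Longrightarrow> (y, x) \<in> (avoid A z)\<^sup>*"
proof -
  have "(avoid A z)\<inverse> = avoid A z" unfolding avoid_def uadj_def by auto
  moreover assume "(x, y) \<in> (avoid A z)\<^sup>*"
  ultimately show ?thesis by (metis converseI rtrancl_converse)
qed

lemma nbr_far:
  assumes T: "ditree V A" and z: "z \<in> V" and w: "w \<in> V" and zw: "z \<noteq> w" and nl: "\<not> leaf V A z"
  shows "\<exists>c. uadj A z c \<and> c \<in> V \<and> c \<noteq> z \<and> (w, c) \<notin> (avoid A z)\<^sup>*"
proof -
  have dg: "digraph V A" using T unfolding ditree_def by simp
  have "(z, w) \<in> (A \<union> A\<inverse>)\<^sup>*" using T z w unfolding ditree_def uconnected_def by blast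
  then obtain y where "(z, y) \<in> A \<union> A\<inverse>" using zw by (metis converse_rtranclE)
  then have y: "uadj A z y" "y \<in> V" using dg unfolding uadj_def digraph_def by auto
  let ?N = "{x \<in> V. uadj A z x}"
  have fin: "finite ?N" using dg unfolding digraph_def by simp
  have "card ?N \<noteq> 1" using nl z unfolding leaf_def by simp
  then obtain c where c: "c \<in> ?N" "c \<noteq> y"
  proof -
    assume r: "\<And>c. c \<in> ?N \<Longrightarrow> c \<noteq> y \<Longrightarrow> thesis"
    show thesis
    proof (rule ccontr)
      assume "\<not> thesis"
      then have "?N = {y}" using r y by blast
      then show False using \<open>card ?N \<noteq> 1\<close> by simp
    qed
  qed
  have nz: "\<And>x. uadj A z x \<Longrightarrow> x \<noteq> z" using dg unfolding digraph_def uadj_def by auto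
  show ?thesis
  proof (rule ccontr)
    assume "\<not> ?thesis"
    then have "(w, y) \<in> (avoid A z)\<^sup>*" "(w, c) \<in> (avoid A z)\<^sup>*" using y c nz by auto
    then have "(y, c) \<in> (avoid A z)\<^sup>*" using avoid_sym rtrancl_trans by metis
    then show False using core[OF T z y(1), of c] c by auto
  qed
qed

lemma avoid_not_end: "(w, x) \<in> (avoid A u)\<^sup>* \<Longrightarrow> w \<noteq> u \<Longrightarrow> x \<noteq> u"
  by (induction rule: rtrancl_induct) (auto simp: avoid_def)

lemma sep_trans:
  assumes "w \<noteq> u" "(w, b) \<in> (avoid A z)\<^sup>*"
  shows "(w, b) \<in> (avoid A u)\<^sup>* \<or> (w, u) \<in> (avoid A z)\<^sup>*"
  using assms(2)
proof (induction rule: rtrancl_induct)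
  case (step x x')
  show ?case
  proof (cases "(w, u) \<in> (avoid A z)\<^sup>*")
    case False
    then have wx: "(w, x) \<in> (avoid A u)\<^sup>*" using step by blast
    show ?thesis
    proof (cases "x' = u")
      case True then show ?thesis using step by (metis rtrancl.rtrancl_into_rtrancl)
    next
      case False
      have "x \<noteq> u" using avoid_not_end wx assms(1) by metis
      then have "(x, x') \<in> avoid A u" using False step unfolding avoid_def by auto
      then show ?thesis using wx by (metis rtrancl.rtrancl_into_rtrancl)
    qed
  qed simp
qed simp


lemma lemX:
  assumes T: "ditree V A" and src: "source_set V A S" and zS: "z \<in> S" and wS: "w \<in> S"
    and zw: "z \<noteq> w" and nl: "\<not> leaf V A z" and G: "geodetic V A M" and MS: "M \<inter> S = {u}"
    and uz: "u = z \<or> (w, u) \<in> (avoid A z)\<^sup>*"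
  shows "\<exists>b\<in>M. b \<noteq> u \<and> b \<noteq> z \<and> (w, b) \<notin> (avoid A z)\<^sup>* \<and> (z, b) \<in> A\<^sup>*"
proof -
  have dg: "digraph V A" using T unfolding ditree_def by simp
  have SV: "S \<subseteq> V" and Sr: "\<forall>x\<in>S. \<forall>y\<in>S. (x, y) \<in> A\<^sup>*"
    using src unfolding source_set_def strong_component_def reach_def by auto
  have zV: "z \<in> V" "w \<in> V" using SV zS wS by auto
  obtain c where c: "uadj A z c" "c \<in> V" "c \<noteq> z" "(w, c) \<notin> (avoid A z)\<^sup>*"
    using nbr_far[OF T zV zw nl] by blast
  have zc: "(z, c) \<in> A\<^sup>*"
  proof (cases "(z, c) \<in> A")
    case False
    then have ca: "(c, z) \<in> A" using c unfolding uadj_def by simp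
    then have "c \<in> S" using source_closed[OF src _ zS] by blast
    then show ?thesis using Sr zS by blast
  qed simp
  have "c \<in> interval_set V A M" using G c unfolding geodetic_def by simp
  then obtain a b where ab: "a \<in> M" "b \<in> M" "c \<in> interval V A a b"
    unfolding interval_set_def by blast
  then obtain p where p: "shortest_dpath V A p a b" "c \<in> set p" unfolding interval_iff by blast
  have d: "dw A p" "hd p = a" "last p = b" "set p \<subseteq> V" using shortest_dw[OF p(1)] by simp_all
  have dist: "distinct p" by (rule shortest_distinct[OF p(1)])
  obtain p1 p2 where pp: "p = p1 @ c # p2" using p(2) by (meson split_list)
  have d1: "dw A (p1 @ [c])" and d2: "dw A (c # p2)" using d(1) pp dw_append[of A p1 c p2] by auto
  have cb: "(c, b) \<in> A\<^sup>*" using dw_hd_last[OF d2] d(3) pp by simp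
  have ac: "(a, c) \<in> A\<^sup>*" using dw_hd_last[OF d1] d(2) pp by (cases p1) auto
  have bV: "b \<in> V" using G ab unfolding geodetic_def by auto
  show ?thesis
  proof (cases "b \<noteq> z \<and> (w, b) \<notin> (avoid A z)\<^sup>*")
    case True
    then have "b \<noteq> u" using uz by blast
    then show ?thesis using True ab zc cb by (meson rtrancl_trans)
  next
    case False
    have zin2: "z \<in> set (c # p2)"
    proof (rule ccontr)
      assume zn: "z \<notin> set (c # p2)"
      then have "(c, b) \<in> (avoid A z)\<^sup>*" using dw_avoid_rt[OF d2 zn] d(3) pp by simp
      moreover have "b \<noteq> z" using zn d(3) pp last_in[OF d2] by auto
      ultimately show False using False c(4) avoid_sym rtrancl_trans by metis
    qed
    then have zp2: "z \<in> set p2" using c(3) by simp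
    have "(c, z) \<in> A\<^sup>*" using dw_reach[OF d2 zin2] by simp
    then have "(a, z) \<in> A\<^sup>*" using ac by simp
    then have "a \<in> S" using source_closed[OF src _ zS] by blast
    then have au: "a = u" using MS ab by blast
    have zin1: "z \<in> set (p1 @ [c])"
    proof (rule ccontr)
      assume zn: "z \<notin> set (p1 @ [c])"
      then have "(a, c) \<in> (avoid A z)\<^sup>*" using dw_avoid_rt[OF d1 zn] d(2) pp by (cases p1) auto
      moreover have "a \<noteq> z" using zn d(2) pp by (cases p1) auto
      ultimately show False using uz au c(4) rtrancl_trans by metis
    qed
    then have "z \<in> set p1" using c(3) by simp
    then show ?thesis using zp2 dist pp by auto
  qed
qed


lemma main_source:
  assumes T: "ditree V A" and src: "source_set V A S"
    and nl: "\<forall>x\<in>S. \<not> leaf V A x" and MG: "min_geodetic V A M"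
    and MS: "M \<inter> S = {u}" and wS: "w \<in> S"
  shows "min_geodetic V A ((M - {u}) \<union> {w})"
proof (cases "w = u")
  case True
  then have "(M - {u}) \<union> {w} = M" using MS by auto
  then show ?thesis using MG by simp
next
  case wu: False
  let ?N = "(M - {u}) \<union> {w}"
  have dg: "digraph V A" using T unfolding ditree_def by simp
  have G: "geodetic V A M" using MG unfolding min_geodetic_def by simp
  have SV: "S \<subseteq> V" and Sr: "\<forall>x\<in>S. \<forall>y\<in>S. (x, y) \<in> A\<^sup>*"
    using src unfolding source_set_def strong_component_def reach_def by auto
  have MV: "M \<subseteq> V" using G unfolding geodetic_def by simp
  have uS: "u \<in> S" "u \<in> M" using MS by auto
  have wV: "w \<in> V" using SV wS by auto
  have NV: "?N \<subseteq> V" using MV wV by auto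
  have inN: "\<And>a b z. a \<in> ?N \<Longrightarrow> b \<in> ?N \<Longrightarrow> z \<in> interval V A a b \<Longrightarrow> z \<in> interval_set V A ?N"
    unfolding interval_set_def by blast
  have sub: "interval_set V A ?N \<subseteq> V"
    unfolding interval_set_def interval_def shortest_dpath_def dwalk_def by blast
  have cov: "z \<in> interval_set V A ?N" if zV: "z \<in> V" for z
  proof (cases "z \<in> S")
    case zS: True
    show ?thesis
    proof (cases "z = w")
      case True
      then have "z \<in> interval V A w w" using H[OF dg _ wV] by simp
      then show ?thesis using inN by blast
    next
      case zw: False
      show ?thesis
      proof (cases "u = z \<or> (w, u) \<in> (avoid A z)\<^sup>*")
        case True
        then obtain b where b: "b \<in> M" "b \<noteq> u" "b \<noteq> z" "(w, b) \<notin> (avoid A z)\<^sup>*" "(z, b) \<in> A\<^sup>*"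
          using lemX[OF T src zS wS zw _ G MS] nl zS by blast
        have "(w, b) \<in> A\<^sup>*" using b(5) Sr wS zS by (meson rtrancl_trans)
        then have "z \<in> interval V A w b" using H[OF dg _ wV] b(4) by blast
        then show ?thesis using inN b by blast
      next
        case False
        then obtain b where b: "b \<in> M" "b \<noteq> u" "(w, b) \<notin> (avoid A u)\<^sup>*" "(u, b) \<in> A\<^sup>*"
          using lemX[OF T src uS(1) wS _ _ G MS] nl uS wu by blast
        have "(w, b) \<in> A\<^sup>*" using b(4) Sr wS uS by (meson rtrancl_trans)
        moreover have "(w, b) \<notin> (avoid A z)\<^sup>*" using sep_trans[OF wu] b(3) False by blast
        ultimately have "z \<in> interval V A w b" using H[OF dg _ wV] by blast
        then show ?thesis using inN b by blast
      qed
    qed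
  next
    case zS: False
    have "z \<in> interval_set V A M" using G zV unfolding geodetic_def by simp
    then obtain a b where ab: "a \<in> M" "b \<in> M" "z \<in> interval V A a b"
      unfolding interval_set_def by blast
    then obtain p where p: "shortest_dpath V A p a b" "z \<in> set p" unfolding interval_iff by blast
    have d: "dw A p" "hd p = a" "last p = b" "set p \<subseteq> V" using shortest_dw[OF p(1)] by simp_all
    have dist: "distinct p" by (rule shortest_distinct[OF p(1)])
    have zb: "(z, b) \<in> A\<^sup>*" using dw_reach[OF d(1) p(2)] d by simp
    have bu: "b \<noteq> u"
    proof
      assume "b = u"
      then show False using source_closed[OF src zb] uS zS by blast
    qed
    show ?thesis
    proof (cases "a = u")
      case False
      then show ?thesis using ab bu inN by blast
    next
      case au: True
      have bV: "b \<in> V" using MV ab by auto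
      have bN: "b \<in> ?N" using ab bu by blast
      show ?thesis
      proof (cases "z = b")
        case True
        then have "z \<in> interval V A b b" using H[OF dg _ bV] by simp
        then show ?thesis using inN bN by blast
      next
        case zb': False
        have ub: "(u, b) \<in> A\<^sup>*" using dw_hd_last[OF d(1)] d au by simp
        have wb: "(w, b) \<in> A\<^sup>*" using ub Sr wS uS by (meson rtrancl_trans)
        have "(w, b) \<notin> (avoid A z)\<^sup>*"
        proof
          assume wbz: "(w, b) \<in> (avoid A z)\<^sup>*"
          obtain p1 p2 where pp: "p = p1 @ z # p2" using p(2) by (meson split_list)
          have "dw A (p1 @ z # p2)" using d(1) pp by simp
          then have d1: "dw A (p1 @ [z])" and d2: "dw A (z # p2)"
            using dw_append[of A p1 z p2] by blast+
          have zu: "z \<noteq> u" using zS uS by auto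
          have hdp: "hd p = u" using d(2) au by simp
          have lp: "last p = b" using d(3) by simp
          have p1ne: "p1 \<noteq> []"
          proof
            assume "p1 = []"
            then have "hd p = z" using pp by simp
            then show False using hdp zu by simp
          qed
          have p2ne: "p2 \<noteq> []"
          proof
            assume "p2 = []"
            then have "last p = z" using pp by simp
            then show False using lp zb' by simp
          qed
          have dp1: "dw A p1" using dw_prefix[OF d1 p1ne] .
          have dp2: "dw A p2" using dw_tl[OF d2 p2ne] .
          have dd: "distinct (p1 @ z # p2)" using dist pp by simp
          then have zn1: "z \<notin> set p1" and zn2: "z \<notin> set p2" by simp_all
          have "hd p = hd p1" using pp p1ne by simp
          then have "hd p1 = u" using hdp by simp
          then have c1: "(u, last p1) \<in> (avoid A z)\<^sup>*" using dw_avoid_rt[OF dp1 zn1] by simp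
          have "last p = last p2" using pp p2ne by simp
          then have "last p2 = b" using lp by simp
          then have c2: "(hd p2, b) \<in> (avoid A z)\<^sup>*" using dw_avoid_rt[OF dp2 zn2] by simp
          have "p1 @ [z] = (butlast p1 @ [last p1]) @ [z]" using p1ne by simp
          then have eq: "butlast p1 @ last p1 # [z] = p1 @ [z]" by simp
          have "dw A (butlast p1 @ last p1 # [z])" unfolding eq using d1 .
          then have "dw A [last p1, z]" using dw_append[of A "butlast p1" "last p1" "[z]"] by blast
          then have a1: "uadj A z (last p1)" unfolding uadj_def by simp
          obtain y ys where yy: "p2 = y # ys" using p2ne by (meson neq_Nil_conv)
          have "(z, y) \<in> A" using d2 unfolding yy by simp
          then have a2: "uadj A z (hd p2)" unfolding uadj_def yy by simp
          have dj: "set p1 \<inter> set (z # p2) = {}" using dd unfolding distinct_append by (elim conjE)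
          have l1: "last p1 \<in> set p1" using p1ne by (rule last_in_set)
          have h2: "hd p2 \<in> set (z # p2)" using p2ne by simp
          have ne: "last p1 \<noteq> hd p2"
          proof
            assume "last p1 = hd p2"
            then have "last p1 \<in> set p1 \<inter> set (z # p2)" using l1 h2 by simp
            then show False using dj by (simp only: empty_iff)
          qed
          obtain q where q: "shortest_dpath V A q w u" using shortest_ex[OF dg _ wV] Sr wS uS by blast
          have dq: "dw A q" "hd q = w" "last q = u" using shortest_dw[OF q] by simp_all
          have "z \<notin> set q"
          proof
            assume "z \<in> set q"
            then have "(z, u) \<in> A\<^sup>*" using dw_reach[OF dq(1)] dq by auto
            then show False using source_closed[OF src _ uS(1)] zS by blast
          qed
          then have wu': "(w, u) \<in> (avoid A z)\<^sup>*" using dw_avoid_rt[OF dq(1)] dq by simp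
          have "(last p1, u) \<in> (avoid A z)\<^sup>*" using avoid_sym[OF c1] .
          moreover have "(u, w) \<in> (avoid A z)\<^sup>*" using avoid_sym[OF wu'] .
          moreover have "(b, hd p2) \<in> (avoid A z)\<^sup>*" using avoid_sym[OF c2] .
          ultimately have "(last p1, hd p2) \<in> (avoid A z)\<^sup>*"
            using wbz by (meson rtrancl_trans)
          then show False using core[OF T zV a1 a2 ne] by blast
        qed
        then have "z \<in> interval V A w b" using H[OF dg wb wV] by blast
        then show ?thesis using inN bN by blast
      qed
    qed
  qed
  have geo: "geodetic V A ?N" unfolding geodetic_def using NV sub cov by blast
  have finM: "finite M" using MV dg unfolding digraph_def by (meson finite_subset)
  have "w \<notin> M" using MS wS wu by blast
  moreover have "card M > 0" using finM uS card_gt_0_iff by blast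
  ultimately have "card ?N = card M" using finM uS by (simp add: card_insert_disjoint card_Diff_singleton)
  then show ?thesis using geo MG unfolding min_geodetic_def by simp
qed


lemma uadj_conv: "uadj (A\<inverse>) = uadj A"
  by (intro ext) (auto simp: uadj_def)

lemma ditree_conv: "ditree V (A\<inverse>) = ditree V A"
proof -
  have "A\<inverse> \<union> (A\<inverse>)\<inverse> = A \<union> A\<inverse>" by auto
  then have "uconnected V (A\<inverse>) = uconnected V A" unfolding uconnected_def by simp
  moreover have "ucycle V (A\<inverse>) = ucycle V A" unfolding ucycle_def uadj_conv by simp
  moreover have "digraph V (A\<inverse>) = digraph V A" unfolding digraph_def by auto
  ultimately show ?thesis unfolding ditree_def by simp
qed

lemma leaf_conv: "leaf V (A\<inverse>) = leaf V A"
  unfolding leaf_def uadj_conv by simp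

lemma reach_conv: "reach (A\<inverse>) x y = reach A y x"
  unfolding reach_def by (simp add: rtrancl_converse)

lemma sc_conv: "strong_component V (A\<inverse>) S = strong_component V A S"
  unfolding strong_component_def reach_conv by blast

lemma sink_conv: "sink_set V A S = source_set V (A\<inverse>) S"
proof -
  have "in_nbhd (A\<inverse>) S = out_nbhd A S" unfolding in_nbhd_def out_nbhd_def by auto
  then show ?thesis unfolding sink_set_def source_set_def sc_conv by simp
qed

lemma dw_snoc: "dw R (xs @ [x, y]) = (dw R (xs @ [x]) \<and> (x, y) \<in> R)"
  using dw_append[of R xs x "[y]"] by simp

lemma dw_conv: "dw (R\<inverse>) p = dw R (rev p)"
proof (induction "R\<inverse>" p rule: dw.induct)
  case (3 x y xs)
  have "dw R (rev (x # y # xs)) = dw R (rev xs @ [y, x])" by simp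
  also have "\<dots> = (dw R (rev xs @ [y]) \<and> (y, x) \<in> R)" by (rule dw_snoc)
  finally show ?case using 3 by auto
qed auto

lemma dwalk_conv: "dwalk V (A\<inverse>) p u v = dwalk V A (rev p) v u"
proof (cases "p = []")
  case True then show ?thesis unfolding dwalk_def by simp
next
  case False
  then show ?thesis unfolding dwalk_dw dw_conv by (auto simp: hd_rev last_rev)
qed

lemma shortest_conv: "shortest_dpath V (A\<inverse>) p u v = shortest_dpath V A (rev p) v u"
proof -
  have "(\<forall>q. dwalk V A (rev q) v u \<longrightarrow> length p \<le> length q) \<longleftrightarrow>
        (\<forall>q. dwalk V A q v u \<longrightarrow> length (rev p) \<le> length q)"
  proof
    assume H: "\<forall>q. dwalk V A (rev q) v u \<longrightarrow> length p \<le> length q"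
    show "\<forall>q. dwalk V A q v u \<longrightarrow> length (rev p) \<le> length q"
    proof (intro allI impI)
      fix q assume "dwalk V A q v u"
      then have "dwalk V A (rev (rev q)) v u" by simp
      then show "length (rev p) \<le> length q" using H by fastforce
    qed
  next
    assume H: "\<forall>q. dwalk V A q v u \<longrightarrow> length (rev p) \<le> length q"
    show "\<forall>q. dwalk V A (rev q) v u \<longrightarrow> length p \<le> length q"
      using H by fastforce
  qed
  then show ?thesis unfolding shortest_dpath_def dwalk_conv by simp
qed

lemma interval_conv: "interval V (A\<inverse>) u v = interval V A v u"
proof (intro set_eqI)
  fix z
  show "z \<in> interval V (A\<inverse>) u v \<longleftrightarrow> z \<in> interval V A v u"
    unfolding interval_iff shortest_conv
  proof
    assume "\<exists>p. shortest_dpath V A (rev p) v u \<and> z \<in> set p"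
    then obtain p where "shortest_dpath V A (rev p) v u" "z \<in> set p" by blast
    then show "\<exists>p. shortest_dpath V A p v u \<and> z \<in> set p" by (intro exI[of _ "rev p"]) simp
  next
    assume "\<exists>p. shortest_dpath V A p v u \<and> z \<in> set p"
    then obtain p where "shortest_dpath V A p v u" "z \<in> set p" by blast
    then show "\<exists>p. shortest_dpath V A (rev p) v u \<and> z \<in> set p" by (intro exI[of _ "rev p"]) simp
  qed
qed

lemma min_geodetic_conv: "min_geodetic V (A\<inverse>) M = min_geodetic V A M"
proof -
  have "\<And>X. interval_set V (A\<inverse>) X = interval_set V A X"
    unfolding interval_set_def interval_conv by blast
  then have "\<And>X. geodetic V (A\<inverse>) X = geodetic V A X" unfolding geodetic_def by simp
  then show ?thesis unfolding min_geodetic_def by simp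
qed

theorem lemma4:
  fixes V :: "'a set" and A :: "('a \<times> 'a) set" and S M :: "'a set" and u w :: 'a
  assumes "ditree V A"
    and "source_set V A S \<or> sink_set V A S"
    and "card S \<ge> 2"
    and "\<forall>x\<in>S. \<not> leaf V A x"
    and "min_geodetic V A M"
    and "M \<inter> S = {u}"
    and "w \<in> S"
  shows "min_geodetic V A ((M - {u}) \<union> {w})"
proof (cases "source_set V A S")
  case True
  show ?thesis by (rule main_source[OF assms(1) True assms(4-7)])
next
  case False
  then have src: "source_set V (A\<inverse>) S" using assms(2) sink_conv by blast
  have T': "ditree V (A\<inverse>)" using ditree_conv[THEN iffD2, OF assms(1)] .
  have nl': "\<forall>x\<in>S. \<not> leaf V (A\<inverse>) x" unfolding leaf_conv using assms(4) .
  have M': "min_geodetic V (A\<inverse>) M" using min_geodetic_conv[THEN iffD2, OF assms(5)] .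
  have "min_geodetic V (A\<inverse>) ((M - {u}) \<union> {w})"
    by (rule main_source[OF T' src nl' M' assms(6,7)])
  then show ?thesis using min_geodetic_conv[THEN iffD1] by blast
qed

end
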